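(* Let $X,Y$ be real locally convex Hausdorff topological vector spaces, $M:X\to Y$ a continuous linear mapping, $D\subset X$ a generalized polyhedral convex set, and $K\subset Y$ a polyhedral convex cone. Consider the problem (VLP): $\min_K\{Mx\mid x\in D\}$. Then the set $E^w$ of weakly efficient solutions of (VLP) is the union of finitely many generalized polyhedral convex sets.
   Context: $\langle x^*,x\rangle$ denotes the value of a continuous linear functional $x^*$ at $x$. A generalized polyhedral convex set in $X$ is a set of the form $\{x\in L\mid \langle x_i^*,x\rangle\le\alpha_i,\ i=1,\dots,p\}$ with $x_i^*\in X^*$, $\alpha_i\in\mathbb{R}$, and $L\subset X$ a closed affine subspace; a polyhedral convex cone in $Y$ is a cone of the form $\{y\in Y\mid \langle y_i^*,y\rangle\le\beta_i,\ i=1,\dots,q\}$ with $y_i^*\in Y^*$, $\beta_i\in\mathbb{R}$. A point $u\in D$ is a weakly efficient solution of (VLP) if there is no $x\in D$ with $Mu-Mx\in\operatorname{int}K$, where $\operatorname{int}K$ is the topological interior of $K$. *)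

theory Defs
  imports "HOL-Analysis.Analysis"
begin

definition lc_tvs :: "'a::{real_vector,t2_space} itself \<Rightarrow> bool" where
  "lc_tvs _ \<longleftrightarrow>
     continuous_on UNIV (\<lambda>(x::'a, y::'a). x + y) \<and>
     continuous_on UNIV (\<lambda>(c::real, x::'a). c *\<^sub>R x) \<and>
     (\<forall>U::'a set. open U \<and> 0 \<in> U \<longrightarrow> (\<exists>V. open V \<and> convex V \<and> 0 \<in> V \<and> V \<subseteq> U))"

definition cont_functional :: "('a::{real_vector,topological_space} \<Rightarrow> real) \<Rightarrow> bool" where
  "cont_functional f \<longleftrightarrow> linear f \<and> continuous_on UNIV f"

definition gen_polyhedral :: "'a::{real_vector,topological_space} set \<Rightarrow> bool" where
  "gen_polyhedral S \<longleftrightarrow>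
     (\<exists>L p (xs :: nat \<Rightarrow> 'a \<Rightarrow> real) (\<alpha> :: nat \<Rightarrow> real).
        closed L \<and> affine L \<and> (\<forall>i<p. cont_functional (xs i)) \<and>
        S = {x \<in> L. \<forall>i<p. xs i x \<le> \<alpha> i})"

definition polyhedral_cone :: "'a::{real_vector,topological_space} set \<Rightarrow> bool" where
  "polyhedral_cone K \<longleftrightarrow> cone K \<and>
     (\<exists>q (ys :: nat \<Rightarrow> 'a \<Rightarrow> real) (\<beta> :: nat \<Rightarrow> real).
        (\<forall>j<q. cont_functional (ys j)) \<and> K = {y. \<forall>j<q. ys j y \<le> \<beta> j})"

definition weakly_efficient ::
  "('a \<Rightarrow> 'b::{real_vector,topological_space}) \<Rightarrow> 'a set \<Rightarrow> 'b set \<Rightarrow> 'a set" where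
  "weakly_efficient M D K = {u \<in> D. \<not> (\<exists>x\<in>D. M u - M x \<in> interior K)}"

end

theory Submission
  imports Defs
begin

lemma int_cone_scale:
  fixes K :: "'b::{real_vector,t2_space} set"
  assumes lc: "lc_tvs TYPE('b)" and cK: "cone K" and y: "y \<in> interior K" and t: "t > 0"
  shows "t *\<^sub>R y \<in> interior K"
proof -
  have c1: "continuous_on UNIV (\<lambda>(c::real, x::'b). c *\<^sub>R x)"
    using lc unfolding lc_tvs_def by blast
  have c2: "continuous_on UNIV (\<lambda>v::'b. (1/t, v))"
    by (intro continuous_intros)
  have "continuous_on UNIV (\<lambda>v::'b. (\<lambda>(c::real, x::'b). c *\<^sub>R x) (1/t, v))"
    by (rule continuous_on_compose2[OF c1 c2]) auto
  hence cf: "continuous_on UNIV (\<lambda>v::'b. (1/t) *\<^sub>R v)" by simp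
  have op: "open ((\<lambda>v::'b. (1/t) *\<^sub>R v) -` interior K)"
    by (rule continuous_imp_open_vimage[OF cf]) auto
  have mem: "t *\<^sub>R y \<in> (\<lambda>v::'b. (1/t) *\<^sub>R v) -` interior K"
    using y t by simp
  have sub: "(\<lambda>v::'b. (1/t) *\<^sub>R v) -` interior K \<subseteq> K"
  proof
    fix v assume "v \<in> (\<lambda>v::'b. (1/t) *\<^sub>R v) -` interior K"
    hence "(1/t) *\<^sub>R v \<in> K" using interior_subset by auto
    hence "t *\<^sub>R ((1/t) *\<^sub>R v) \<in> K" using cK t less_imp_le unfolding cone_def by blast
    thus "v \<in> K" using t by simp
  qed
  show ?thesis by (rule interiorI[OF op mem sub])
qed

theorem theorem4p5:
  fixes M :: "'a::{real_vector,t2_space} \<Rightarrow> 'b::{real_vector,t2_space}"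
    and D :: "'a set" and K :: "'b set"
  assumes "lc_tvs TYPE('a)" and "lc_tvs TYPE('b)"
    and "linear M" and "continuous_on UNIV M"
    and "gen_polyhedral D"
    and "polyhedral_cone K"
  shows "\<exists>\<F>. finite \<F> \<and> (\<forall>S\<in>\<F>. gen_polyhedral S) \<and> weakly_efficient M D K = \<Union>\<F>"
proof -
  note lc = assms(2)
  note linM = assms(3)
  have cK: "cone K" using assms(6) unfolding polyhedral_cone_def by (elim conjE)
  obtain L p and a :: "nat \<Rightarrow> 'a \<Rightarrow> real" and \<alpha> :: "nat \<Rightarrow> real" where cL: "closed L" and aL: "affine L"
    and ca: "\<forall>i<p. cont_functional (a i)"
    and Ddef: "D = {x \<in> L. \<forall>i<p. a i x \<le> \<alpha> i}"
    using assms(5) unfolding gen_polyhedral_def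
    apply (elim exE conjE)
    apply (rule that)
    apply assumption+
    done
  have la: "linear (a i)" if "i < p" for i using ca that unfolding cont_functional_def by blast
  define good where "good A \<longleftrightarrow> \<not> (\<exists>x\<in>L. \<exists>y\<in>L. (\<forall>i\<in>A. a i x \<le> a i y) \<and> M y - M x \<in> interior K)"
    for A :: "nat set"
  define S where "S A = {u \<in> D. \<forall>i\<in>A. a i u = \<alpha> i}" for A :: "nat set"
  define F where "F = S ` {A \<in> Pow {..<p}. good A}"
  have finF: "finite F" unfolding F_def by simp
  have polyF: "gen_polyhedral (S A)" if "A \<subseteq> {..<p}" for A
  proof -
    define xs where "xs i = (if i < p then a i else if i - p \<in> A then (\<lambda>x. - a (i - p) x) else (\<lambda>x. 0))" for i
    define be where "be i = (if i < p then \<alpha> i else if i - p \<in> A then - \<alpha> (i - p) else 0)" for i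
    have "\<forall>i<2*p. cont_functional (xs i)"
    proof (intro allI impI)
      fix i assume "i < 2*p"
      show "cont_functional (xs i)"
      proof (cases "i < p")
        case True thus ?thesis using ca xs_def by simp
      next
        case False
        hence ip: "i - p < p" using \<open>i < 2*p\<close> by simp
        have c: "cont_functional (a (i-p))" using ca ip by blast
        have "cont_functional (\<lambda>x. - a (i - p) x)"
          using c unfolding cont_functional_def
          by (auto intro: linear_compose_neg continuous_intros)
        moreover have "cont_functional (\<lambda>x::'a. 0::real)"
          unfolding cont_functional_def by (auto intro: linear_zero)
        ultimately show ?thesis using False xs_def by simp
      qed
    qed
    moreover have "S A = {x \<in> L. \<forall>i<2*p. xs i x \<le> be i}"
    proof -
      have "(\<forall>i<2*p. xs i x \<le> be i) \<longleftrightarrow> (\<forall>i<p. a i x \<le> \<alpha> i) \<and> (\<forall>i\<in>A. a i x = \<alpha> i)" for x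
      proof
        assume h: "\<forall>i<2*p. xs i x \<le> be i"
        have 1: "\<forall>i<p. a i x \<le> \<alpha> i"
        proof (intro allI impI)
          fix i assume ip: "i < p"
          hence "xs i x \<le> be i" using h by simp
          thus "a i x \<le> \<alpha> i" using ip by (simp add: xs_def be_def)
        qed
        moreover have "\<forall>i\<in>A. a i x = \<alpha> i"
        proof
          fix i assume iA: "i \<in> A"
          hence ip: "i < p" using that by auto
          have "xs (i+p) x \<le> be (i+p)" using h ip by auto
          hence "- a i x \<le> - \<alpha> i" using iA by (simp add: xs_def be_def)
          thus "a i x = \<alpha> i" using 1 ip by force
        qed
        ultimately show "(\<forall>i<p. a i x \<le> \<alpha> i) \<and> (\<forall>i\<in>A. a i x = \<alpha> i)" by blast
      next
        assume h: "(\<forall>i<p. a i x \<le> \<alpha> i) \<and> (\<forall>i\<in>A. a i x = \<alpha> i)"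
        show "\<forall>i<2*p. xs i x \<le> be i" using h by (auto simp: xs_def be_def)
      qed
      thus ?thesis unfolding S_def Ddef by auto
    qed
    ultimately show ?thesis unfolding gen_polyhedral_def
      by (intro exI[where x=L] exI[where x="2*p"] exI[where x=xs] exI[where x=be]) (simp add: cL aL)
  qed
  have E1: "weakly_efficient M D K \<subseteq> \<Union>F"
  proof
    fix u assume uE: "u \<in> weakly_efficient M D K"
    hence uD: "u \<in> D" and noX: "\<not> (\<exists>x\<in>D. M u - M x \<in> interior K)"
      unfolding weakly_efficient_def by auto
    define A where "A = {i. i < p \<and> a i u = \<alpha> i}"
    have uL: "u \<in> L" and ua: "\<forall>i<p. a i u \<le> \<alpha> i" using uD Ddef by auto
    have "good A"
      unfolding good_def
    proof
      assume "\<exists>x\<in>L. \<exists>y\<in>L. (\<forall>i\<in>A. a i x \<le> a i y) \<and> M y - M x \<in> interior K"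
      then obtain x y where xL: "x \<in> L" and yL: "y \<in> L" and xyA: "\<forall>i\<in>A. a i x \<le> a i y"
        and xyK: "M y - M x \<in> interior K" by blast
      define B where "B = {i. i < p \<and> i \<notin> A}"
      have "\<forall>\<^sub>F t in at_right (0::real). \<forall>i\<in>B. t * (a i x - a i y) < \<alpha> i - a i u"
      proof (rule eventually_ball_finite)
        show "finite B" unfolding B_def by simp
        show "\<forall>i\<in>B. \<forall>\<^sub>F t in at_right (0::real). t * (a i x - a i y) < \<alpha> i - a i u"
        proof
          fix i assume "i \<in> B"
          hence "a i u < \<alpha> i" using ua A_def B_def by force
          moreover have "((\<lambda>t. t * (a i x - a i y)) \<longlongrightarrow> 0 * (a i x - a i y)) (at_right (0::real))"
            by (intro tendsto_intros)
          ultimately show "\<forall>\<^sub>F t in at_right (0::real). t * (a i x - a i y) < \<alpha> i - a i u"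
            using order_tendstoD(2) by fastforce
        qed
      qed
      moreover have "\<forall>\<^sub>F t in at_right (0::real). 0 < t"
        by (simp add: eventually_at_right_less)
      ultimately have "\<forall>\<^sub>F t in at_right (0::real). 0 < t \<and> (\<forall>i\<in>B. t * (a i x - a i y) < \<alpha> i - a i u)"
        by (simp add: eventually_conj)
      then obtain t where t0: "0 < t" and tB: "\<forall>i\<in>B. t * (a i x - a i y) < \<alpha> i - a i u"
        using eventually_happens'[OF trivial_limit_at_right_real] by blast
      define w where "w = u + t *\<^sub>R (x - y)"
      have wL: "w \<in> L" unfolding w_def using mem_affine_3_minus[OF aL uL xL yL] .
      have aw: "a i w = a i u + t * (a i x - a i y)" if "i < p" for i
        using la[OF that] unfolding w_def by (simp add: linear_add linear_diff linear_scale)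
      have "\<forall>i<p. a i w \<le> \<alpha> i"
      proof (intro allI impI)
        fix i assume ip: "i < p"
        show "a i w \<le> \<alpha> i"
        proof (cases "i \<in> A")
          case True
          hence "a i x \<le> a i y" "a i u = \<alpha> i" using xyA A_def by auto
          thus ?thesis using aw[OF ip] t0 by (simp add: mult_nonneg_nonpos)
        next
          case False
          thus ?thesis using aw[OF ip] tB B_def ip by force
        qed
      qed
      hence wD: "w \<in> D" using wL Ddef by blast
      have "M u - M w = t *\<^sub>R (M y - M x)"
        unfolding w_def using linM by (simp add: linear_add linear_diff linear_scale algebra_simps)
      also have "\<dots> \<in> interior K" by (rule int_cone_scale[OF lc cK xyK t0])
      finally show False using noX wD by blast
    qed
    moreover have "A \<in> Pow {..<p}" unfolding A_def by auto
    moreover have "u \<in> S A" unfolding S_def A_def using uD by auto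
    ultimately show "u \<in> \<Union>F" unfolding F_def by blast
  qed
  have E2: "\<Union>F \<subseteq> weakly_efficient M D K"
  proof
    fix u assume "u \<in> \<Union>F"
    then obtain A where gA: "good A" and uS: "u \<in> S A" and Ap: "A \<subseteq> {..<p}" unfolding F_def by blast
    have uD: "u \<in> D" and uA: "\<forall>i\<in>A. a i u = \<alpha> i" using uS S_def by auto
    have "\<not> (\<exists>x\<in>D. M u - M x \<in> interior K)"
    proof
      assume "\<exists>x\<in>D. M u - M x \<in> interior K"
      then obtain x where xD: "x \<in> D" and xK: "M u - M x \<in> interior K" by blast
      have "x \<in> L" "u \<in> L" using xD uD Ddef by auto
      moreover have "\<forall>i\<in>A. a i x \<le> a i u"
      proof
        fix i assume iA: "i \<in> A"
        have "i < p" using Ap iA by auto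
        thus "a i x \<le> a i u" using xD Ddef uA iA by auto
      qed
      ultimately show False using gA xK unfolding good_def by blast
    qed
    thus "u \<in> weakly_efficient M D K" using uD unfolding weakly_efficient_def by blast
  qed
  have "\<forall>T\<in>F. gen_polyhedral T" unfolding F_def using polyF by blast
  thus ?thesis using finF E1 E2 by (intro exI[of _ F]) blast
qed

end
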